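(* Let $N>0$, $m>0$, $F>0$, $\alpha>0$, $w>0$ be fixed with $Nm>\alpha$, and for $g\geq 0$, $\tau\in(0,1)$, $L_g\geq 0$ define \[ L=\frac{N\left[(1-\tau)(mL_g+\alpha F)+(mg+F)mN\right]}{\alpha+(Nm-\alpha)\tau},\qquad p=\frac{L+L_g}{L+L_g-\alpha g}\left(mw+\frac{\alpha(1-\tau)w}{N}\right), \] regarded as functions of $(g,\tau,L_g)$. Then \[ \frac{\partial p}{\partial g}>0,\qquad \frac{\partial p}{\partial \tau}<0,\qquad \frac{\partial p}{\partial L_g}\leq 0 . \]
   Context: $L$ is equilibrium private employment and $p$ the equilibrium price of every variety in a monopolistic-competition general equilibrium model with a measure $N$ of firms, marginal and fixed labor inputs $m$ and $F$, CARA utility parameter $\alpha$, nominal wage $w$, income tax rate $\tau$, government purchase $g$ of each variety, and government employment $L_g$. Equivalently $p=mw(L+L_g)/(L+L_g-\alpha((L+L_g)q+g))$ with $q=(1-\tau)(L+L_g-\alpha g)/((Nm+\alpha(1-\tau))(L+L_g))$. Partial derivatives are taken in $(g,\tau,L_g)$ with other parameters fixed. *)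

theory Defs
  imports Complex_Main
begin

definition Lemp :: "real \<Rightarrow> real \<Rightarrow> real \<Rightarrow> real \<Rightarrow> real \<Rightarrow> real \<Rightarrow> real \<Rightarrow> real" where
  "Lemp N m F \<alpha> g \<tau> Lg =
     N * ((1 - \<tau>) * (m * Lg + \<alpha> * F) + (m * g + F) * m * N) / (\<alpha> + (N * m - \<alpha>) * \<tau>)"

definition price :: "real \<Rightarrow> real \<Rightarrow> real \<Rightarrow> real \<Rightarrow> real \<Rightarrow> real \<Rightarrow> real \<Rightarrow> real \<Rightarrow> real" where
  "price N m F \<alpha> w g \<tau> Lg =
     (Lemp N m F \<alpha> g \<tau> Lg + Lg) / (Lemp N m F \<alpha> g \<tau> Lg + Lg - \<alpha> * g)
       * (m * w + \<alpha> * (1 - \<tau>) * w / N)"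

end

theory Submission
  imports Defs
begin

definition XX :: "real \<Rightarrow> real \<Rightarrow> real \<Rightarrow> real \<Rightarrow> real \<Rightarrow> real \<Rightarrow> real \<Rightarrow> real" where
  "XX N m F \<alpha> g t l = (N * m + \<alpha> * (1 - t)) * l + N * \<alpha> * F * (1 - t) + N * (m * g + F) * m * N"
definition YY :: "real \<Rightarrow> real \<Rightarrow> real \<Rightarrow> real \<Rightarrow> real \<Rightarrow> real \<Rightarrow> real \<Rightarrow> real" where
  "YY N m F \<alpha> g t l = XX N m F \<alpha> g t l - \<alpha> * g * (\<alpha> + (N * m - \<alpha>) * t)"

lemma divcancel: "(c::real) \<noteq> 0 \<Longrightarrow> (a/c)/(b/c) = a/b"
  by (simp add: divide_inverse)

lemma price_eq:
  assumes "\<alpha> + (N * m - \<alpha>) * t \<noteq> 0" "N \<noteq> 0"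
  shows "price N m F \<alpha> w g t l = w / N * (N * m + \<alpha> * (1 - t)) * XX N m F \<alpha> g t l / YY N m F \<alpha> g t l"
proof -
  let ?D = "\<alpha> + (N * m - \<alpha>) * t"
  have 1: "Lemp N m F \<alpha> g t l + l = XX N m F \<alpha> g t l / ?D"
    using assms unfolding Lemp_def XX_def by (simp add: field_simps)
  have 2: "Lemp N m F \<alpha> g t l + l - \<alpha> * g = YY N m F \<alpha> g t l / ?D"
    using assms 1 unfolding YY_def by (simp add: field_simps)
  have 3: "m * w + \<alpha> * (1 - t) * w / N = w / N * (N * m + \<alpha> * (1 - t))"
    using assms by (simp add: field_simps)
  have 4: "(XX N m F \<alpha> g t l / ?D) / (YY N m F \<alpha> g t l / ?D) = XX N m F \<alpha> g t l / YY N m F \<alpha> g t l"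
    using assms(1) by (rule divcancel)
  show ?thesis unfolding price_def unfolding 2 unfolding 1 unfolding 3 4 by (simp add: mult_ac)
qed

lemma Ypos:
  fixes N m F \<alpha> g t l :: real
  assumes "N > 0" "m > 0" "F > 0" "\<alpha> > 0" "N * m > \<alpha>"
    and "g \<ge> 0" "0 < t" "t < 1" "l \<ge> 0"
  shows "YY N m F \<alpha> g t l > 0"
proof -
  have B: "N * m + \<alpha> * (1 - t) > 0" using assms by (smt (verit) mult_pos_pos)
  have "(N * m - \<alpha>) * t < (N * m - \<alpha>) * 1"
    by (rule mult_strict_left_mono) (use assms in auto)
  hence D0: "\<alpha> + (N * m - \<alpha>) * t < N * m" by simp
  have D0p: "\<alpha> + (N * m - \<alpha>) * t > 0" using assms by (smt (verit) mult_pos_pos)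
  have "\<alpha> * (\<alpha> + (N * m - \<alpha>) * t) < (N*m) * (N*m)"
    using D0 D0p assms by (smt (verit) mult_strict_mono)
  hence "\<alpha> * g * (\<alpha> + (N * m - \<alpha>) * t) \<le> (N*m)*(N*m) * g"
    using assms by (smt (verit) mult.commute mult.left_commute mult_right_mono)
  moreover have "YY N m F \<alpha> g t l = (N * m + \<alpha> * (1 - t)) * (l + N * F) + (N*m)*(N*m)*g - \<alpha> * g * (\<alpha> + (N * m - \<alpha>) * t)"
    unfolding YY_def XX_def by (simp add: algebra_simps)
  moreover have "(N * m + \<alpha> * (1 - t)) * (l + N * F) > 0" using B assms by (intro mult_pos_pos) (auto intro: add_nonneg_pos)
  ultimately show ?thesis by linarith
qed


lemma quot:
  fixes X Y :: "real \<Rightarrow> real"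
  assumes "(X has_real_derivative a) (at z)" "(Y has_real_derivative b) (at z)" "Y z \<noteq> 0"
  shows "((\<lambda>x. c * X x / Y x) has_real_derivative c * (a * Y z - X z * b) / (Y z)^2) (at z)"
  using assms
  apply (auto intro!: derivative_eq_intros)
  apply (simp add: field_simps power2_eq_square)
  done

lemma dXg: "((\<lambda>x. XX N m F \<alpha> x t l) has_real_derivative N * m * m * N) (at g)"
  unfolding XX_def by (auto intro!: derivative_eq_intros)
lemma dYg: "((\<lambda>x. YY N m F \<alpha> x t l) has_real_derivative N * m * m * N - \<alpha> * (\<alpha> + (N * m - \<alpha>) * t)) (at g)"
  unfolding YY_def by (auto intro!: derivative_eq_intros dXg)
lemma dXl: "((\<lambda>x. XX N m F \<alpha> g t x) has_real_derivative N * m + \<alpha> * (1 - t)) (at l)"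
  unfolding XX_def by (auto intro!: derivative_eq_intros)
lemma dYl: "((\<lambda>x. YY N m F \<alpha> g t x) has_real_derivative N * m + \<alpha> * (1 - t)) (at l)"
  unfolding YY_def by (auto intro!: derivative_eq_intros dXl)
lemma dXt: "((\<lambda>x. (N * m + \<alpha> * (1 - x)) * XX N m F \<alpha> g x l) has_real_derivative
    - \<alpha> * XX N m F \<alpha> g t l + (N * m + \<alpha> * (1 - t)) * (- \<alpha> * l - N * \<alpha> * F)) (at t)"
  unfolding XX_def by (auto intro!: derivative_eq_intros simp: algebra_simps)
lemma dYt: "((\<lambda>x. YY N m F \<alpha> g x l) has_real_derivative (- \<alpha> * l - N * \<alpha> * F) - \<alpha> * g * (N * m - \<alpha>)) (at t)"
  unfolding YY_def XX_def by (auto intro!: derivative_eq_intros simp: algebra_simps)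

theorem theorem3:
  fixes N m F \<alpha> w g \<tau> Lg :: real
  assumes "N > 0" "m > 0" "F > 0" "\<alpha> > 0" "w > 0" "N * m > \<alpha>"
    and "g \<ge> 0" "0 < \<tau>" "\<tau> < 1" "Lg \<ge> 0"
  shows "(\<exists>D. ((\<lambda>x. price N m F \<alpha> w x \<tau> Lg) has_real_derivative D) (at g) \<and> D > 0)
       \<and> (\<exists>D. ((\<lambda>t. price N m F \<alpha> w g t Lg) has_real_derivative D) (at \<tau>) \<and> D < 0)
       \<and> (\<exists>D. ((\<lambda>l. price N m F \<alpha> w g \<tau> l) has_real_derivative D) (at Lg) \<and> D \<le> 0)"
proof -
  define B where "B = N * m + \<alpha> * (1 - \<tau>)"
  define D0 where "D0 = \<alpha> + (N * m - \<alpha>) * \<tau>"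
  define Y where "Y = YY N m F \<alpha> g \<tau> Lg"
  define X where "X = XX N m F \<alpha> g \<tau> Lg"
  have Bp: "B > 0" unfolding B_def using assms by (smt (verit) mult_pos_pos)
  have D0p: "D0 > 0" unfolding D0_def using assms by (smt (verit) mult_pos_pos)
  have Yp: "Y > 0" unfolding Y_def using Ypos assms by blast
  have Np: "N \<noteq> 0" using assms by simp
  have wN: "w / N > 0" using assms by simp
  have LF: "Lg + N * F > 0" using assms by (smt (verit) mult_pos_pos)
  have peq: "\<And>x t l. \<alpha> + (N * m - \<alpha>) * t \<noteq> 0 \<Longrightarrow> price N m F \<alpha> w x t l =
      w / N * ((N * m + \<alpha> * (1 - t)) * XX N m F \<alpha> x t l) / YY N m F \<alpha> x t l"
    using price_eq Np by (simp add: mult.assoc)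
  have P1: "\<exists>D. ((\<lambda>x. price N m F \<alpha> w x \<tau> Lg) has_real_derivative D) (at g) \<and> D > 0"
  proof -
    have fe: "(\<lambda>x. price N m F \<alpha> w x \<tau> Lg) = (\<lambda>x. (w / N * B) * XX N m F \<alpha> x \<tau> Lg / YY N m F \<alpha> x \<tau> Lg)"
      using peq D0p unfolding D0_def B_def by (auto simp: mult.assoc)
    have d: "((\<lambda>x. (w / N * B) * XX N m F \<alpha> x \<tau> Lg / YY N m F \<alpha> x \<tau> Lg) has_real_derivative
        (w / N * B) * (N * m * m * N * Y - X * (N * m * m * N - \<alpha> * D0)) / Y^2) (at g)"
      unfolding X_def Y_def D0_def by (rule quot[OF dXg dYg]) (use Yp Y_def in auto)
    have num: "N * m * m * N * Y - X * (N * m * m * N - \<alpha> * D0) = \<alpha> * D0 * B * (Lg + N * F)"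
      unfolding X_def Y_def D0_def B_def YY_def XX_def by (simp add: algebra_simps)
    have "(w / N * B) * (\<alpha> * D0 * B * (Lg + N * F)) / Y^2 > 0"
      using wN Bp D0p LF Yp assms by (intro divide_pos_pos mult_pos_pos) auto
    then show ?thesis using d num fe by auto
  qed
  have P3: "\<exists>D. ((\<lambda>l. price N m F \<alpha> w g \<tau> l) has_real_derivative D) (at Lg) \<and> D \<le> 0"
  proof -
    have fe: "(\<lambda>l. price N m F \<alpha> w g \<tau> l) = (\<lambda>l. (w / N * B) * XX N m F \<alpha> g \<tau> l / YY N m F \<alpha> g \<tau> l)"
      using peq D0p unfolding D0_def B_def by (auto simp: mult.assoc)
    have d: "((\<lambda>l. (w / N * B) * XX N m F \<alpha> g \<tau> l / YY N m F \<alpha> g \<tau> l) has_real_derivative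
        (w / N * B) * (B * Y - X * B) / Y^2) (at Lg)"
      unfolding X_def Y_def B_def by (rule quot[OF dXl dYl]) (use Yp Y_def in auto)
    have num: "B * Y - X * B = - (\<alpha> * g * D0 * B)"
      unfolding X_def Y_def D0_def B_def YY_def by (simp add: algebra_simps)
    have "\<alpha> * g * D0 * B \<ge> 0" using assms D0p Bp by simp
    hence "(w / N * B) * (- (\<alpha> * g * D0 * B)) / Y^2 \<le> 0"
      using mult_pos_pos[OF wN Bp] by (intro divide_nonpos_nonneg mult_nonneg_nonpos) auto
    then show ?thesis using d num fe by auto
  qed
  have P2: "\<exists>D. ((\<lambda>t. price N m F \<alpha> w g t Lg) has_real_derivative D) (at \<tau>) \<and> D < 0"
  proof -
    let ?S = "{0<..<1::real}"
    have fe: "\<And>t. t \<in> ?S \<Longrightarrow> (\<lambda>t. (w / N) * ((N * m + \<alpha> * (1 - t)) * XX N m F \<alpha> g t Lg) / YY N m F \<alpha> g t Lg) t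
       = price N m F \<alpha> w g t Lg"
    proof -
      fix t :: real assume "t \<in> ?S"
      hence "\<alpha> + (N * m - \<alpha>) * t > 0" using assms by (smt (verit) greaterThanLessThan_iff mult_pos_pos)
      thus "?thesis t" using peq by simp
    qed
    have d: "((\<lambda>t. (w / N) * ((N * m + \<alpha> * (1 - t)) * XX N m F \<alpha> g t Lg) / YY N m F \<alpha> g t Lg) has_real_derivative
        (w / N) * ((- \<alpha> * X + B * (- \<alpha> * Lg - N * \<alpha> * F)) * Y - (B * X) * ((- \<alpha> * Lg - N * \<alpha> * F) - \<alpha> * g * (N * m - \<alpha>))) / Y^2) (at \<tau>)"
      unfolding X_def Y_def B_def by (rule quot[OF dXt dYt]) (use Yp Y_def in auto)
    have num: "(- \<alpha> * X + B * (- \<alpha> * Lg - N * \<alpha> * F)) * Y - (B * X) * ((- \<alpha> * Lg - N * \<alpha> * F) - \<alpha> * g * (N * m - \<alpha>))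
       = - (\<alpha> * B * (Lg + N * F) * Y)"
      unfolding X_def Y_def D0_def B_def YY_def XX_def by (simp add: algebra_simps)
    have d2: "((\<lambda>t. price N m F \<alpha> w g t Lg) has_real_derivative
        (w / N) * (- (\<alpha> * B * (Lg + N * F) * Y)) / Y^2) (at \<tau>)"
      using has_field_derivative_transform_within_open[OF d[unfolded num], of ?S] fe assms by auto
    have "(w / N) * (\<alpha> * B * (Lg + N * F) * Y) / Y^2 > 0"
      using wN Bp LF Yp assms by (intro divide_pos_pos mult_pos_pos) auto
    hence "(w / N) * (- (\<alpha> * B * (Lg + N * F) * Y)) / Y^2 < 0" by simp
    then show ?thesis using d2 by auto
  qed
  show ?thesis using P1 P2 P3 by blast
qed

end
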